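(* Let $d\ge2$ and let $\mathcal{T}_d$ be the channel on a $d$-dimensional system given by $\mathcal{T}_d(\rho)=\mathrm{Tr}(\rho)|0\rangle\langle0|$. Then for $1/d^2\le t\le 1$, $$\mathcal{O}_t(\mathcal{T}_d)=\begin{cases}\frac1d & \text{if } \frac1d\le t\le1,\\ \frac{1}{d^2}\Big(1+\sqrt{(td^2-1)(d-1)}\Big) & \text{if } \frac1{d^2}\le t\le\frac1d.\end{cases}$$ An optimizer is $|0\rangle\langle0|_r\otimes\rho_a$ for any density operator $\rho_a$ with $\mathrm{Tr}(\rho_a^2)\le t$ when $1/d\le t\le1$, and $(1-k)\frac{I_{ra}}{d^2}+k\,|0\rangle\langle0|_r\otimes\frac{I_a}{d}$ with $k=\sqrt{\frac{td^2-1}{d-1}}$ when $1/d^2\le t\le 1/d$.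
   Context: For a channel $\mathcal{N}:\mathcal{L}(\mathcal{H}_a)\to\mathcal{L}(\mathcal{H}_b)$ with $\dim\mathcal{H}_a=\dim\mathcal{H}_b=\dim\mathcal{H}_r=d$, define $\mathcal{O}_t(\mathcal{N})=\max\{\langle\phi_{rb}|(\mathrm{id}_r\otimes\mathcal{N})(\rho_{ra})|\phi_{rb}\rangle:\ \rho_{ra}\succeq0,\ \mathrm{Tr}\rho_{ra}=1,\ \mathrm{Tr}(\rho_{ra}^2)\le t\}$, where $|\phi_{rb}\rangle=\frac{1}{\sqrt d}\sum_i|\alpha_i\rangle_r\otimes|\alpha_i\rangle_b$ is maximally entangled for an orthonormal basis $\{|\alpha_i\rangle\}$ with $|0\rangle$ one of its elements. *)

theory Defs
  imports "Jordan_Normal_Form.Matrix" "Jordan_Normal_Form.Conjugate"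
begin

definition mtrace :: "complex mat \<Rightarrow> complex" where
  "mtrace A = (\<Sum>i<dim_row A. A $$ (i, i))"

text \<open>Positive semidefinite n x n complex matrices (complex order: 0 \<le> z means z real, nonnegative).\<close>
definition psd :: "nat \<Rightarrow> complex mat \<Rightarrow> bool" where
  "psd n A \<longleftrightarrow> A \<in> carrier_mat n n \<and> (\<forall>v \<in> carrier_vec n. 0 \<le> (A *\<^sub>v v) \<bullet>c v)"

definition density :: "nat \<Rightarrow> complex mat \<Rightarrow> bool" where
  "density n \<rho> \<longleftrightarrow> psd n \<rho> \<and> mtrace \<rho> = 1"

text \<open>Kronecker (tensor) product; index i of A \<otimes> B corresponds to (i div dim B, i mod dim B).\<close>
definition kron :: "complex mat \<Rightarrow> complex mat \<Rightarrow> complex mat" where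
  "kron A B = mat (dim_row A * dim_row B) (dim_col A * dim_col B)
     (\<lambda>(i,j). A $$ (i div dim_row B, j div dim_col B) * B $$ (i mod dim_row B, j mod dim_col B))"

definition block :: "nat \<Rightarrow> complex mat \<Rightarrow> nat \<Rightarrow> nat \<Rightarrow> complex mat" where
  "block d \<rho> p q = mat d d (\<lambda>(k,l). \<rho> $$ (p * d + k, q * d + l))"

definition id_tensor :: "nat \<Rightarrow> (complex mat \<Rightarrow> complex mat) \<Rightarrow> complex mat \<Rightarrow> complex mat" where
  "id_tensor d N \<rho> = mat (d * d) (d * d)
     (\<lambda>(i,j). N (block d \<rho> (i div d) (j div d)) $$ (i mod d, j mod d))"

definition orthonormal_basis :: "nat \<Rightarrow> (nat \<Rightarrow> complex vec) \<Rightarrow> bool" where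
  "orthonormal_basis d \<alpha> \<longleftrightarrow> (\<forall>i<d. \<alpha> i \<in> carrier_vec d) \<and>
     (\<forall>i<d. \<forall>j<d. \<alpha> i \<bullet>c \<alpha> j = (if i = j then 1 else 0))"

definition max_ent :: "nat \<Rightarrow> (nat \<Rightarrow> complex vec) \<Rightarrow> complex vec" where
  "max_ent d \<alpha> = vec (d * d)
     (\<lambda>i. (\<Sum>k<d. \<alpha> k $ (i div d) * \<alpha> k $ (i mod d)) / complex_of_real (sqrt (real d)))"

definition ent_fidelity :: "nat \<Rightarrow> (complex mat \<Rightarrow> complex mat) \<Rightarrow> (nat \<Rightarrow> complex vec) \<Rightarrow> complex mat \<Rightarrow> real" where
  "ent_fidelity d N \<alpha> \<rho> = Re ((id_tensor d N \<rho> *\<^sub>v max_ent d \<alpha>) \<bullet>c max_ent d \<alpha>)"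

definition feasible :: "nat \<Rightarrow> real \<Rightarrow> complex mat \<Rightarrow> bool" where
  "feasible d t \<rho> \<longleftrightarrow> density (d * d) \<rho> \<and> mtrace (\<rho> * \<rho>) \<le> complex_of_real t"

definition O_t :: "nat \<Rightarrow> (complex mat \<Rightarrow> complex mat) \<Rightarrow> (nat \<Rightarrow> complex vec) \<Rightarrow> real \<Rightarrow> real" where
  "O_t d N \<alpha> t = Sup {ent_fidelity d N \<alpha> \<rho> | \<rho>. feasible d t \<rho>}"

definition proj0 :: "nat \<Rightarrow> complex mat" where
  "proj0 d = mat d d (\<lambda>(i,j). if i = 0 \<and> j = 0 then 1 else 0)"

definition T_chan :: "nat \<Rightarrow> complex mat \<Rightarrow> complex mat" where
  "T_chan d \<rho> = mtrace \<rho> \<cdot>\<^sub>m proj0 d"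

end

theory Submission
  imports Defs
begin

lemma qf:
  fixes A :: "complex mat"
  assumes "A \<in> carrier_mat n n" "v \<in> carrier_vec n"
  shows "(A *\<^sub>v v) \<bullet>c v = (\<Sum>i<n. \<Sum>j<n. A $$ (i,j) * v $ j * cnj (v $ i))"
  using assms
  by (auto simp: scalar_prod_def row_def sum_distrib_right lessThan_atLeast0 intro!: sum.cong)


lemma alpha0:
  assumes "orthonormal_basis d \<alpha>" "k0 < d" "\<alpha> k0 = unit_vec d 0" "k < d" "0 < d"
  shows "\<alpha> k $ 0 = (if k = k0 then 1 else 0)"
proof -
  have c: "\<alpha> k \<in> carrier_vec d" using assms unfolding orthonormal_basis_def by auto
  have "\<alpha> k \<bullet>c \<alpha> k0 = (if k = k0 then 1 else 0)" using assms(1,2,4) unfolding orthonormal_basis_def by blast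
  moreover have "\<alpha> k \<bullet>c \<alpha> k0 = \<alpha> k $ 0"
    unfolding assms(3) scalar_prod_def using c assms(5)
    by (simp add: if_distrib[where f=cnj] if_distrib[where f="\<lambda>x. _ * x"] cong: if_cong)
  ultimately show ?thesis by simp
qed

lemma phi0:
  assumes "orthonormal_basis d \<alpha>" "k0 < d" "\<alpha> k0 = unit_vec d 0" "0 < d" "i < d * d" "i mod d = 0"
  shows "max_ent d \<alpha> $ i = (if i = 0 then 1 / complex_of_real (sqrt (real d)) else 0)"
proof -
  have idd: "i div d < d" using assms by (simp add: less_mult_imp_div_less)
  have "(\<Sum>k<d. \<alpha> k $ (i div d) * \<alpha> k $ (i mod d)) = (\<Sum>k<d. if k = k0 then \<alpha> k0 $ (i div d) else 0)"
    using alpha0[OF assms(1-3) _ assms(4)] assms(6) by (intro sum.cong) auto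
  also have "\<dots> = \<alpha> k0 $ (i div d)" using assms(2) by simp
  also have "\<dots> = (if i = 0 then 1 else 0)" using assms idd
    by (auto simp: div_eq_0_iff)
  finally show ?thesis using assms unfolding max_ent_def by auto
qed

lemma M_entry:
  assumes "0 < d" "i < d * d" "j < d * d"
  shows "id_tensor d (T_chan d) \<rho> $$ (i,j) =
    (if i mod d = 0 \<and> j mod d = 0 then (\<Sum>k<d. \<rho> $$ ((i div d) * d + k, (j div d) * d + k)) else 0)"
  using assms unfolding id_tensor_def T_chan_def proj0_def mtrace_def block_def
  by auto

lemma fid:
  assumes "orthonormal_basis d \<alpha>" "k0 < d" "\<alpha> k0 = unit_vec d 0" "0 < d"
  shows "ent_fidelity d (T_chan d) \<alpha> \<rho> = Re (\<Sum>k<d. \<rho> $$ (k,k)) / real d"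
proof -
  let ?M = "id_tensor d (T_chan d) \<rho>"
  let ?p = "max_ent d \<alpha>"
  have Mc: "?M \<in> carrier_mat (d*d) (d*d)" unfolding id_tensor_def by auto
  have pc: "?p \<in> carrier_vec (d*d)" unfolding max_ent_def by auto
  have sq: "1 / complex_of_real (sqrt (real d)) * cnj (1 / complex_of_real (sqrt (real d))) = 1 / of_real (real d)"
    using assms(4) by (simp add: field_simps flip: of_real_mult)
  have trm: "?M $$ (i,j) * ?p $ j * cnj (?p $ i) = (if i = 0 \<and> j = 0 then (\<Sum>k<d. \<rho> $$ (k,k)) / of_real (real d) else 0)"
    if "i < d*d" "j < d*d" for i j
  proof (cases "i mod d = 0 \<and> j mod d = 0")
    case True
    then show ?thesis using phi0[OF assms(1-4) that(1)] phi0[OF assms(1-4) that(2)] M_entry[OF assms(4) that] sq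
      by (auto simp: mult.assoc)
  next
    case False
    then have n0: "\<not> (i = 0 \<and> j = 0)" by (metis mod_0)
    have "?M $$ (i,j) = 0" by (subst M_entry[OF assms(4) that]) (use False in auto)
    then show ?thesis using n0 by auto
  qed
  have in1: "(\<Sum>j<d*d. ?M $$ (i,j) * ?p $ j * cnj (?p $ i)) = (if i = 0 then (\<Sum>k<d. \<rho> $$ (k,k)) / of_real (real d) else 0)"
    if "i < d*d" for i
  proof -
    have "(\<Sum>j<d*d. ?M $$ (i,j) * ?p $ j * cnj (?p $ i)) = (\<Sum>j<d*d. if j = 0 then (if i = 0 then (\<Sum>k<d. \<rho> $$ (k,k)) / of_real (real d) else 0) else 0)"
      using trm that by (intro sum.cong) auto
    also have "\<dots> = (if i = 0 then (\<Sum>k<d. \<rho> $$ (k,k)) / of_real (real d) else 0)"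
      using that by (subst sum.delta) auto
    finally show ?thesis .
  qed
  have "(?M *\<^sub>v ?p) \<bullet>c ?p = (\<Sum>i<d*d. if i = 0 then (\<Sum>k<d. \<rho> $$ (k,k)) / of_real (real d) else 0)"
    unfolding qf[OF Mc pc] using in1 by (intro sum.cong) auto
  also have "\<dots> = (\<Sum>k<d. \<rho> $$ (k,k)) / of_real (real d)" using assms(4) by (subst sum.delta) auto
  finally show ?thesis unfolding ent_fidelity_def by (simp add: Re_divide_of_real)
qed
lemma qf2:
  fixes A :: "complex mat"
  assumes "A \<in> carrier_mat n n" "v \<in> carrier_vec n" "i < n" "j < n" "i \<noteq> j"
    "\<And>l. l < n \<Longrightarrow> l \<noteq> i \<Longrightarrow> l \<noteq> j \<Longrightarrow> v $ l = 0"
  shows "(A *\<^sub>v v) \<bullet>c v = A $$ (i,i) * v $ i * cnj (v $ i) + A $$ (i,j) * v $ j * cnj (v $ i)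
     + A $$ (j,i) * v $ i * cnj (v $ j) + A $$ (j,j) * v $ j * cnj (v $ j)"
proof -
  have inner: "(\<Sum>b<n. A $$ (a,b) * v $ b * cnj (v $ a)) = A $$ (a,i) * v $ i * cnj (v $ a) + A $$ (a,j) * v $ j * cnj (v $ a)" for a
  proof -
    have "(\<Sum>b<n. A $$ (a,b) * v $ b * cnj (v $ a)) = (\<Sum>b\<in>{i,j}. A $$ (a,b) * v $ b * cnj (v $ a))"
      by (rule sum.mono_neutral_right) (auto simp: assms)
    then show ?thesis using assms(5) by simp
  qed
  have "(A *\<^sub>v v) \<bullet>c v = (\<Sum>a<n. A $$ (a,i) * v $ i * cnj (v $ a) + A $$ (a,j) * v $ j * cnj (v $ a))"
    by (simp add: qf[OF assms(1,2)] inner)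
  also have "\<dots> = (\<Sum>a\<in>{i,j}. A $$ (a,i) * v $ i * cnj (v $ a) + A $$ (a,j) * v $ j * cnj (v $ a))"
    by (rule sum.mono_neutral_right) (use assms in auto)
  finally show ?thesis using assms(5) by simp
qed

lemma psd_diag:
  assumes "psd n A" "i < n"
  shows "Im (A $$ (i,i)) = 0 \<and> Re (A $$ (i,i)) \<ge> 0"
proof -
  have A: "A \<in> carrier_mat n n" using assms unfolding psd_def by auto
  have "0 \<le> (A *\<^sub>v unit_vec n i) \<bullet>c unit_vec n i" using assms unfolding psd_def by auto
  also have "(A *\<^sub>v unit_vec n i) \<bullet>c unit_vec n i = A $$ (i,i)"
  proof -
    have h1: "(\<Sum>j<n. (A $$ (ia, j)::complex) * (if j = i then 1 else 0) * cnj (if ia = i then 1 else 0)) = (if ia = i then A $$ (i,i) else 0)" for ia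
      using assms(2) by (cases "ia = i") (auto simp: if_distrib[where f="\<lambda>x. _ * x"] cong: if_cong)
    have h2: "(\<Sum>ia<n. \<Sum>j<n. A $$ (ia,j) * unit_vec n i $ j * cnj (unit_vec n i $ ia)) = (\<Sum>ia<n. \<Sum>j<n. A $$ (ia,j) * (if j = i then 1 else 0) * cnj (if ia = i then 1 else 0))"
      using assms(2) by (intro sum.cong) auto
    show ?thesis unfolding qf[OF A index_unit_vec(3)[THEN carrier_vecI]] h2 h1 using assms(2) by simp
  qed
  finally show ?thesis by (auto simp: less_eq_complex_def)
qed

lemma ii: "(z::complex) * \<i> * \<i> = - z" by (simp add: mult.assoc)

lemma psd_herm:
  assumes "psd n A" "i < n" "j < n"
  shows "A $$ (j,i) = cnj (A $$ (i,j))"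
proof (cases "i = j")
  case True then show ?thesis using psd_diag[OF assms(1,2)] by (simp add: complex_eq_iff)
next
  case False
  have A: "A \<in> carrier_mat n n" using assms unfolding psd_def by auto
  define v1 where "v1 = vec n (\<lambda>l. if l = i then 1 else if l = j then 1 else (0::complex))"
  define v2 where "v2 = vec n (\<lambda>l. if l = i then 1 else if l = j then \<i> else (0::complex))"
  have 1: "0 \<le> (A *\<^sub>v v1) \<bullet>c v1" using assms unfolding psd_def v1_def by auto
  have 2: "0 \<le> (A *\<^sub>v v2) \<bullet>c v2" using assms unfolding psd_def v2_def by auto
  have e1: "(A *\<^sub>v v1) \<bullet>c v1 = A $$ (i,i) + A $$ (i,j) + A $$ (j,i) + A $$ (j,j)"
    by (subst qf2[OF A _ assms(2,3) False]) (use assms False in \<open>auto simp: v1_def\<close>)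
  have e2: "(A *\<^sub>v v2) \<bullet>c v2 = A $$ (i,i) + A $$ (i,j) * \<i> - \<i> * A $$ (j,i) + A $$ (j,j)"
    by (subst qf2[OF A _ assms(2,3) False]) (use assms False in \<open>auto simp: v2_def ii\<close>)
  have d1: "Im (A $$ (i,i)) = 0" "Im (A $$ (j,j)) = 0"
    using psd_diag[OF assms(1,2)] psd_diag[OF assms(1,3)] by auto
  show ?thesis using 1 2 d1 ii unfolding e1 e2 by (auto simp: less_eq_complex_def complex_eq_iff mult.assoc)
qed

lemma cs:
  fixes f :: "nat \<Rightarrow> real"
  assumes "finite I"
  shows "(\<Sum>i\<in>I. f i)^2 \<le> real (card I) * (\<Sum>i\<in>I. (f i)^2)"
proof -
  define c where "c = real (card I)"
  define S where "S = (\<Sum>i\<in>I. f i)"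
  have "0 \<le> (\<Sum>i\<in>I. (c * f i - S)^2)" by (rule sum_nonneg) auto
  also have "\<dots> = (\<Sum>i\<in>I. c^2 * (f i)^2 - (2*c*S) * f i + S^2)"
    by (rule sum.cong) (auto simp: power2_eq_square algebra_simps)
  also have "\<dots> = c^2 * (\<Sum>i\<in>I. (f i)^2) - (2*c*S) * S + c * S^2"
    by (simp add: sum.distrib sum_subtractf sum_distrib_left[symmetric] c_def S_def)
  finally have h: "0 \<le> c * (c * (\<Sum>i\<in>I. (f i)^2) - S^2)" by (simp add: algebra_simps power2_eq_square)
  show ?thesis
  proof (cases "c = 0")
    case True then show ?thesis using assms by (simp add: c_def)
  next
    case False then have "c > 0" by (simp add: c_def)
    then show ?thesis using h by (simp add: zero_le_mult_iff c_def S_def)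
  qed
qed

lemma tr_sq:
  fixes A :: "complex mat"
  assumes "A \<in> carrier_mat n n"
  shows "mtrace (A * A) = (\<Sum>i<n. \<Sum>j<n. A $$ (i,j) * A $$ (j,i))"
  using assms unfolding mtrace_def
  by (auto simp: scalar_prod_def row_def col_def lessThan_atLeast0 intro!: sum.cong)

lemma bound:
  assumes "feasible d t \<rho>" "2 \<le> d"
  defines "x \<equiv> Re (\<Sum>k<d. \<rho> $$ (k,k))"
  shows "x \<le> 1 \<and> real d * x^2 - 2 * x + 1 \<le> t * real d * (real d - 1)"
proof -
  define n where "n = d * d"
  have psd: "psd n \<rho>" and tr: "mtrace \<rho> = 1" and trs: "mtrace (\<rho> * \<rho>) \<le> complex_of_real t"
    using assms(1) unfolding feasible_def density_def n_def by auto
  have rc: "\<rho> \<in> carrier_mat n n" using psd unfolding psd_def by auto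
  define y where "y i = Re (\<rho> $$ (i,i))" for i
  have y0: "y i \<ge> 0" if "i < n" for i using psd_diag[OF psd that] unfolding y_def by auto
  have dn: "d \<le> n" unfolding n_def using assms(2) by simp
  have s1: "(\<Sum>i<n. y i) = 1" using tr rc unfolding mtrace_def y_def by (simp flip: Re_sum)
  have xd: "x = (\<Sum>i<d. y i)" unfolding x_def y_def by (simp add: Re_sum)
  have split: "(\<Sum>i<n. f i) = (\<Sum>i<d. f i) + (\<Sum>i\<in>{d..<n}. f i)" for f :: "nat \<Rightarrow> real"
    using dn by (simp add: lessThan_atLeast0 sum.atLeastLessThan_concat)
  have sq: "(\<Sum>i<n. (y i)^2) \<le> t"
  proof -
    have "(\<Sum>i<n. (y i)^2) \<le> (\<Sum>i<n. \<Sum>j<n. Re (\<rho> $$ (i,j) * \<rho> $$ (j,i)))"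
    proof (rule sum_mono)
      fix i assume i: "i \<in> {..<n}"
      have nn: "0 \<le> Re (\<rho> $$ (i,j) * \<rho> $$ (j,i))" if "j < n" for j
        using psd_herm[OF psd _ that, of i] i by (simp add: complex_mult_cnj)
      have "Re (\<rho> $$ (i,i) * \<rho> $$ (i,i)) \<le> (\<Sum>j<n. Re (\<rho> $$ (i,j) * \<rho> $$ (j,i)))"
        using i nn by (intro member_le_sum[where f="\<lambda>j. Re (\<rho> $$ (i,j) * \<rho> $$ (j,i))"]) auto
      moreover have "Re (\<rho> $$ (i,i) * \<rho> $$ (i,i)) = (y i)^2"
        using psd_diag[OF psd] i unfolding y_def by (simp add: power2_eq_square)
      ultimately show "(y i)^2 \<le> (\<Sum>j<n. Re (\<rho> $$ (i,j) * \<rho> $$ (j,i)))" by simp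
    qed
    also have "\<dots> = Re (mtrace (\<rho> * \<rho>))" unfolding tr_sq[OF rc] by (simp add: Re_sum)
    also have "\<dots> \<le> t" using trs by (simp add: less_eq_complex_def)
    finally show ?thesis .
  qed
  define A where "A = (\<Sum>i<d. (y i)^2)"
  define B where "B = (\<Sum>i\<in>{d..<n}. (y i)^2)"
  have AB: "A + B \<le> t" using sq split[of "\<lambda>i. (y i)^2"] unfolding A_def B_def by simp
  have r: "(\<Sum>i\<in>{d..<n}. y i) = 1 - x" using s1 split[of y] xd by simp
  have B0: "0 \<le> (\<Sum>i\<in>{d..<n}. y i)" using y0 by (intro sum_nonneg) auto
  have cA: "x^2 \<le> real d * A" using cs[of "{..<d}" y] unfolding xd A_def by simp
  have cB: "(1 - x)^2 \<le> (real d * real d - real d) * B"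
  proof -
    have "card {d..<n} = d * d - d" unfolding n_def by simp
    moreover have "real (d * d - d) = real d * real d - real d" using dn unfolding n_def by (simp add: of_nat_diff)
    ultimately show ?thesis using cs[of "{d..<n}" y] r unfolding B_def by simp
  qed
  have dpos: "real d - 1 > 0" using assms(2) by simp
  have "(real d - 1) * x^2 \<le> (real d - 1) * (real d * A)" using cA dpos by simp
  moreover have "(real d * real d - real d) * B = real d * (real d - 1) * B" by (simp add: algebra_simps)
  moreover have "real d * (real d - 1) * (A + B) \<le> real d * (real d - 1) * t"
    using AB dpos assms(2) by (intro mult_left_mono) auto
  ultimately have "(real d - 1) * x^2 + (1 - x)^2 \<le> t * real d * (real d - 1)"
    using cB by (simp add: algebra_simps)
  moreover have "(real d - 1) * x^2 + (1 - x)^2 = real d * x^2 - 2 * x + 1"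
    by (simp add: algebra_simps power2_eq_square)
  ultimately show ?thesis using r B0 by simp
qed

lemma dsum:
  assumes "\<And>i j. i < n \<Longrightarrow> j < n \<Longrightarrow> A $$ (i,j) = (if i = j then complex_of_real (c i) else 0)"
  shows "(\<Sum>i<n. \<Sum>j<n. A $$ (i,j) * f i j) = (\<Sum>i<n. complex_of_real (c i) * f i i)"
proof (rule sum.cong[OF refl])
  fix i assume i: "i \<in> {..<n}"
  have "(\<Sum>j<n. A $$ (i,j) * f i j) = (\<Sum>j<n. if j = i then complex_of_real (c i) * f i i else 0)"
    using assms i by (intro sum.cong) auto
  then show "(\<Sum>j<n. A $$ (i,j) * f i j) = complex_of_real (c i) * f i i" using i by simp
qed

lemma restrict2:
  fixes f :: "nat \<Rightarrow> nat \<Rightarrow> complex"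
  assumes "d \<le> n" "\<And>i j. i < n \<Longrightarrow> j < n \<Longrightarrow> \<not> (i < d \<and> j < d) \<Longrightarrow> f i j = 0"
  shows "(\<Sum>i<n. \<Sum>j<n. f i j) = (\<Sum>i<d. \<Sum>j<d. f i j)"
proof -
  have "(\<Sum>i<n. \<Sum>j<n. f i j) = (\<Sum>i<d. \<Sum>j<n. f i j)"
    by (rule sum.mono_neutral_right) (use assms in auto)
  also have "\<dots> = (\<Sum>i<d. \<Sum>j<d. f i j)"
    by (rule sum.cong[OF refl], rule sum.mono_neutral_right) (use assms in auto)
  finally show ?thesis .
qed

lemma restrict1:
  fixes f :: "nat \<Rightarrow> complex"
  assumes "d \<le> n" "\<And>i. i < n \<Longrightarrow> \<not> i < d \<Longrightarrow> f i = 0"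
  shows "(\<Sum>i<n. f i) = (\<Sum>i<d. f i)"
  by (rule sum.mono_neutral_right) (use assms in auto)

lemma lt_dd: "k < d \<Longrightarrow> k < d * (d::nat)"
  by (metis le_square order_less_le_trans)

lemma kron_dims[simp]: "dim_row (kron A B) = dim_row A * dim_row B" "dim_col (kron A B) = dim_col A * dim_col B"
  unfolding kron_def by auto

lemma proj0_dims[simp]: "dim_row (proj0 d) = d" "dim_col (proj0 d) = d"
  unfolding proj0_def by auto

lemma kron_entry:
  assumes "\<rho>a \<in> carrier_mat d d" "i < d * d" "j < d * d"
  shows "kron (proj0 d) \<rho>a $$ (i,j) = (if i < d \<and> j < d then \<rho>a $$ (i,j) else 0)"
proof -
  have d: "0 < d" using assms(2) by (cases d) auto
  have "i div d < d" "j div d < d" using assms(2,3) by (simp_all add: less_mult_imp_div_less)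
  then show ?thesis using assms d unfolding kron_def proj0_def
    by (auto simp: div_eq_0_iff)
qed

lemma kron_props:
  assumes "density d \<rho>a" "2 \<le> d"
  defines "K \<equiv> kron (proj0 d) \<rho>a"
  shows "psd (d*d) K" "mtrace K = 1" "mtrace (K * K) = mtrace (\<rho>a * \<rho>a)"
    "(\<Sum>k<d. K $$ (k,k)) = 1"
proof -
  have pa: "psd d \<rho>a" and ta: "mtrace \<rho>a = 1" using assms(1) unfolding density_def by auto
  have rc: "\<rho>a \<in> carrier_mat d d" using pa unfolding psd_def by auto
  have Kc: "K \<in> carrier_mat (d*d) (d*d)" unfolding K_def kron_def proj0_def using rc by auto
  have dn: "d \<le> d * d" by simp
  have Ke: "K $$ (i,j) = (if i < d \<and> j < d then \<rho>a $$ (i,j) else 0)" if "i < d*d" "j < d*d" for i j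
    unfolding K_def using kron_entry[OF rc that] .
  have "(\<Sum>k<d. K $$ (k,k)) = (\<Sum>k<d. \<rho>a $$ (k,k))"
  proof (rule sum.cong[OF refl])
    fix k assume "k \<in> {..<d}"
    then have "k < d" "k < d*d" using lt_dd by auto
    then show "K $$ (k,k) = \<rho>a $$ (k,k)" using Ke by simp
  qed
  then show "(\<Sum>k<d. K $$ (k,k)) = 1" using ta rc unfolding mtrace_def by simp
  moreover have "(\<Sum>i<d*d. K $$ (i,i)) = (\<Sum>i<d. K $$ (i,i))"
    by (rule restrict1[OF dn]) (simp add: Ke)
  moreover have "dim_row K = d*d" using Kc by auto
  ultimately show "mtrace K = 1" unfolding mtrace_def by simp
  show "mtrace (K * K) = mtrace (\<rho>a * \<rho>a)"
    unfolding tr_sq[OF Kc] tr_sq[OF rc]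
    by (subst restrict2[OF dn]) (auto simp: Ke lt_dd intro!: sum.cong)
  show "psd (d*d) K" unfolding psd_def
  proof (intro conjI ballI Kc)
    fix v :: "complex vec" assume v: "v \<in> carrier_vec (d*d)"
    define w where "w = vec d (\<lambda>i. v $ i)"
    have "(K *\<^sub>v v) \<bullet>c v = (\<rho>a *\<^sub>v w) \<bullet>c w"
      unfolding qf[OF Kc v] qf[OF rc, of w, unfolded w_def, OF vec_carrier, folded w_def]
      by (subst restrict2[OF dn]) (auto simp: Ke w_def lt_dd intro!: sum.cong)
    also have "0 \<le> \<dots>" using pa unfolding psd_def w_def by auto
    finally show "0 \<le> (K *\<^sub>v v) \<bullet>c v" by simp
  qed
qed

lemma sigma_props:
  assumes "2 \<le> d" "0 \<le> k" "k \<le> 1"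
  defines "\<sigma> \<equiv> complex_of_real ((1 - k) / (real d)^2) \<cdot>\<^sub>m 1\<^sub>m (d * d)
                     + complex_of_real k \<cdot>\<^sub>m kron (proj0 d) (complex_of_real (1 / real d) \<cdot>\<^sub>m 1\<^sub>m d)"
  shows "psd (d*d) \<sigma>" "mtrace \<sigma> = 1"
    "mtrace (\<sigma> * \<sigma>) = complex_of_real (1 / (real d)^2 + k^2 * (real d - 1) / (real d)^2)"
    "(\<Sum>i<d. \<sigma> $$ (i,i)) = complex_of_real ((1 - k) / real d + k)"
proof -
  define c where "c i = (if i < d then (1 - k) / (real d)^2 + k / real d else (1 - k) / (real d)^2)" for i
  have c0: "c i \<ge> 0" for i using assms unfolding c_def by auto
  have sc: "\<sigma> \<in> carrier_mat (d*d) (d*d)" unfolding \<sigma>_def kron_def proj0_def by auto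
  have dn: "d \<le> d * d" by simp
  have se: "\<sigma> $$ (i,j) = (if i = j then complex_of_real (c i) else 0)" if "i < d*d" "j < d*d" for i j
  proof -
    have ke: "kron (proj0 d) (complex_of_real (1 / real d) \<cdot>\<^sub>m 1\<^sub>m d) $$ (i,j) = (if i < d \<and> j < d then (if i = j then complex_of_real (1 / real d) else 0) else 0)"
      by (subst kron_entry[OF _ that]) auto
    show ?thesis unfolding \<sigma>_def using that ke sc
      by (auto simp: c_def \<sigma>_def)
  qed
  have split: "(\<Sum>i<d*d. f i) = (\<Sum>i<d. f i) + (\<Sum>i\<in>{d..<d*d}. f i)" for f :: "nat \<Rightarrow> real"
    using dn by (simp add: lessThan_atLeast0 sum.atLeastLessThan_concat)
  have cardr: "real (card {d..<d*d}) = real d * real d - real d" using dn by (simp add: of_nat_diff)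
  have dpos: "real d > 0" using assms by simp
  have s1: "(\<Sum>i<d. c i) = (1 - k) / real d + k"
    using dpos by (simp add: c_def power2_eq_square field_simps)
  have s2: "(\<Sum>i\<in>{d..<d*d}. c i) = (real d * real d - real d) * ((1 - k) / (real d)^2)"
    unfolding c_def using cardr by simp
  have s3: "(\<Sum>i<d. (c i)^2) = real d * ((1 - k) / (real d)^2 + k / real d)^2"
    by (simp add: c_def)
  have s4: "(\<Sum>i\<in>{d..<d*d}. (c i)^2) = (real d * real d - real d) * ((1 - k) / (real d)^2)^2"
    unfolding c_def using cardr by simp
  have dsq: "(\<Sum>i<d*d. \<Sum>j<d*d. \<sigma> $$ (i,j) * f i j) = (\<Sum>i<d*d. complex_of_real (c i) * f i i)" for f
    by (rule dsum) (use se in auto)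
  show "mtrace \<sigma> = 1"
  proof -
    have "mtrace \<sigma> = (\<Sum>i<d*d. complex_of_real (c i))" unfolding mtrace_def using sc se by (auto intro!: sum.cong)
    also have "\<dots> = complex_of_real (\<Sum>i<d*d. c i)" by simp
    also have "(\<Sum>i<d*d. c i) = 1" unfolding split s1 s2 using dpos
      by (simp add: field_simps power2_eq_square)
    finally show ?thesis by simp
  qed
  show "(\<Sum>i<d. \<sigma> $$ (i,i)) = complex_of_real ((1 - k) / real d + k)"
  proof -
    have "(\<Sum>i<d. \<sigma> $$ (i,i)) = (\<Sum>i<d. complex_of_real (c i))" using se lt_dd by (auto intro!: sum.cong)
    then show ?thesis using s1 by (simp flip: of_real_sum)
  qed
  show "mtrace (\<sigma> * \<sigma>) = complex_of_real (1 / (real d)^2 + k^2 * (real d - 1) / (real d)^2)"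
  proof -
    have "mtrace (\<sigma> * \<sigma>) = (\<Sum>i<d*d. complex_of_real (c i) * \<sigma> $$ (i,i))"
      unfolding tr_sq[OF sc] dsq ..
    also have "\<dots> = complex_of_real (\<Sum>i<d*d. (c i)^2)" using se by (auto simp: power2_eq_square intro!: sum.cong)
    also have "(\<Sum>i<d*d. (c i)^2) = 1 / (real d)^2 + k^2 * (real d - 1) / (real d)^2"
      unfolding split s3 s4 using dpos by (simp add: field_simps power2_eq_square)
    finally show ?thesis by simp
  qed
  show "psd (d*d) \<sigma>" unfolding psd_def
  proof (intro conjI ballI sc)
    fix v :: "complex vec" assume v: "v \<in> carrier_vec (d*d)"
    have "(\<sigma> *\<^sub>v v) \<bullet>c v = (\<Sum>i<d*d. complex_of_real (c i) * (v $ i * cnj (v $ i)))"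
      unfolding qf[OF sc v] using dsq[of "\<lambda>i j. v $ j * cnj (v $ i)"] by (simp add: mult.assoc)
    also have "0 \<le> \<dots>"
    proof (rule sum_nonneg)
      fix i
      show "0 \<le> complex_of_real (c i) * (v $ i * cnj (v $ i))"
        using c0[of i] by (simp add: complex_mult_cnj less_eq_complex_def flip: of_real_mult)
    qed
    finally show "0 \<le> (\<sigma> *\<^sub>v v) \<bullet>c v" .
  qed
qed

lemma quad_bound:
  fixes x t :: real and d :: nat
  assumes "2 \<le> d" "real d * x^2 - 2 * x + 1 \<le> t * real d * (real d - 1)" "0 \<le> t * (real d)^2 - 1"
  shows "x / real d \<le> (1 + sqrt ((t * (real d)^2 - 1) * (real d - 1))) / (real d)^2"
proof -
  have dp: "real d > 0" using assms by simp
  have "real d * x - 1 \<le> sqrt ((t * (real d)^2 - 1) * (real d - 1))"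
  proof (cases "real d * x - 1 \<le> 0")
    case True
    have "0 \<le> (t * (real d)^2 - 1) * (real d - 1)" using assms(3) dp by simp
    then have "0 \<le> sqrt ((t * (real d)^2 - 1) * (real d - 1))" by simp
    with True show ?thesis by linarith
  next
    case False
    have "real d * (real d * x^2 - 2 * x + 1) \<le> real d * (t * real d * (real d - 1))"
      using assms(2) dp by (intro mult_left_mono) auto
    then have "(real d * x - 1)^2 \<le> (t * (real d)^2 - 1) * (real d - 1)"
      by (simp add: power2_eq_square algebra_simps)
    then show ?thesis using False by (intro real_le_rsqrt) auto
  qed
  then have "real d * x \<le> 1 + sqrt ((t * (real d)^2 - 1) * (real d - 1))" by simp
  then show ?thesis using dp by (simp add: field_simps power2_eq_square)
qed

theorem mainTheorem6:
  fixes d :: nat and t :: real and \<alpha> :: "nat \<Rightarrow> complex vec"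
  assumes "d \<ge> 2"
    and "orthonormal_basis d \<alpha>" and "\<exists>k<d. \<alpha> k = unit_vec d 0"
    and "1 / (real d)^2 \<le> t" and "t \<le> 1"
  shows "(1 / real d \<le> t \<longrightarrow>
            O_t d (T_chan d) \<alpha> t = 1 / real d \<and>
            (\<forall>\<rho>a. density d \<rho>a \<and> mtrace (\<rho>a * \<rho>a) \<le> complex_of_real t \<longrightarrow>
               feasible d t (kron (proj0 d) \<rho>a) \<and>
               ent_fidelity d (T_chan d) \<alpha> (kron (proj0 d) \<rho>a) = 1 / real d))
       \<and> (t \<le> 1 / real d \<longrightarrow>
            (let k = sqrt ((t * (real d)^2 - 1) / (real d - 1));
                 \<sigma> = complex_of_real ((1 - k) / (real d)^2) \<cdot>\<^sub>m 1\<^sub>m (d * d)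
                     + complex_of_real k \<cdot>\<^sub>m kron (proj0 d) (complex_of_real (1 / real d) \<cdot>\<^sub>m 1\<^sub>m d);
                 v = (1 + sqrt ((t * (real d)^2 - 1) * (real d - 1))) / (real d)^2
             in O_t d (T_chan d) \<alpha> t = v \<and> feasible d t \<sigma> \<and> ent_fidelity d (T_chan d) \<alpha> \<sigma> = v))"
proof -
  obtain k0 where k0: "k0 < d" "\<alpha> k0 = unit_vec d 0" using assms(3) by auto
  have d0: "0 < d" using assms(1) by simp
  have dp: "real d > 0" "real d - 1 > 0" using assms(1) by auto
  note F = fid[OF assms(2) k0 d0]
  define S where "S = {ent_fidelity d (T_chan d) \<alpha> \<rho> | \<rho>. feasible d t \<rho>}"
  have O: "O_t d (T_chan d) \<alpha> t = Sup S" unfolding O_t_def S_def ..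
  define sig where "sig k = complex_of_real ((1 - k) / (real d)^2) \<cdot>\<^sub>m 1\<^sub>m (d * d)
                     + complex_of_real k \<cdot>\<^sub>m kron (proj0 d) (complex_of_real (1 / real d) \<cdot>\<^sub>m 1\<^sub>m d)" for k
  have sigF: "feasible d t (sig k) \<and> ent_fidelity d (T_chan d) \<alpha> (sig k) = (1 + k * (real d - 1)) / (real d)^2"
    if "0 \<le> k" "k \<le> 1" "1 / (real d)^2 + k^2 * (real d - 1) / (real d)^2 \<le> t" for k
  proof -
    note sp = sigma_props[OF assms(1) that(1,2), folded sig_def]
    have "feasible d t (sig k)" unfolding feasible_def density_def
      using sp(1,2,3) that(3) by (simp add: less_eq_complex_def)
    moreover have "ent_fidelity d (T_chan d) \<alpha> (sig k) = (1 + k * (real d - 1)) / (real d)^2"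
      unfolding F sp(4) using dp by (simp add: field_simps power2_eq_square)
    ultimately show ?thesis by simp
  qed
  have part1: "1 / real d \<le> t \<longrightarrow>
            O_t d (T_chan d) \<alpha> t = 1 / real d \<and>
            (\<forall>\<rho>a. density d \<rho>a \<and> mtrace (\<rho>a * \<rho>a) \<le> complex_of_real t \<longrightarrow>
               feasible d t (kron (proj0 d) \<rho>a) \<and>
               ent_fidelity d (T_chan d) \<alpha> (kron (proj0 d) \<rho>a) = 1 / real d)"
  proof (intro impI conjI)
    assume t1: "1 / real d \<le> t"
    have "1 / (real d)^2 + 1^2 * (real d - 1) / (real d)^2 = 1 / real d"
      using dp by (simp add: field_simps power2_eq_square)
    then have s1: "feasible d t (sig 1) \<and> ent_fidelity d (T_chan d) \<alpha> (sig 1) = 1 / real d"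
      using sigF[of 1] t1 dp by (simp add: field_simps power2_eq_square)
    have mem: "1 / real d \<in> S" unfolding S_def using s1 by force
    have ub: "s \<le> 1 / real d" if "s \<in> S" for s
    proof -
      obtain \<rho> where r: "feasible d t \<rho>" "s = ent_fidelity d (T_chan d) \<alpha> \<rho>" using \<open>s \<in> S\<close> unfolding S_def by blast
      have "Re (\<Sum>k<d. \<rho> $$ (k,k)) \<le> 1" using bound[OF r(1) assms(1)] by simp
      then show ?thesis unfolding r(2) F using dp by (simp add: divide_right_mono)
    qed
    show "O_t d (T_chan d) \<alpha> t = 1 / real d" unfolding O by (rule cSup_eq_maximum[OF mem ub])
  next
    show "\<forall>\<rho>a. density d \<rho>a \<and> mtrace (\<rho>a * \<rho>a) \<le> complex_of_real t \<longrightarrow>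
               feasible d t (kron (proj0 d) \<rho>a) \<and>
               ent_fidelity d (T_chan d) \<alpha> (kron (proj0 d) \<rho>a) = 1 / real d"
    proof (intro allI impI)
      fix \<rho>a
      assume h: "density d \<rho>a \<and> mtrace (\<rho>a * \<rho>a) \<le> complex_of_real t"
      note kp = kron_props[OF conjunct1[OF h] assms(1)]
      show "feasible d t (kron (proj0 d) \<rho>a) \<and>
               ent_fidelity d (T_chan d) \<alpha> (kron (proj0 d) \<rho>a) = 1 / real d"
        unfolding feasible_def density_def F using kp h by simp
    qed
  qed
  have part2: "t \<le> 1 / real d \<longrightarrow>
            (let k = sqrt ((t * (real d)^2 - 1) / (real d - 1));
                 \<sigma> = complex_of_real ((1 - k) / (real d)^2) \<cdot>\<^sub>m 1\<^sub>m (d * d)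
                     + complex_of_real k \<cdot>\<^sub>m kron (proj0 d) (complex_of_real (1 / real d) \<cdot>\<^sub>m 1\<^sub>m d);
                 v = (1 + sqrt ((t * (real d)^2 - 1) * (real d - 1))) / (real d)^2
             in O_t d (T_chan d) \<alpha> t = v \<and> feasible d t \<sigma> \<and> ent_fidelity d (T_chan d) \<alpha> \<sigma> = v)"
  proof
    assume t2: "t \<le> 1 / real d"
    define k where "k = sqrt ((t * (real d)^2 - 1) / (real d - 1))"
    define v where "v = (1 + sqrt ((t * (real d)^2 - 1) * (real d - 1))) / (real d)^2"
    have a0: "t * (real d)^2 - 1 \<ge> 0" using assms(4) dp by (simp add: field_simps)
    have a1: "t * (real d)^2 - 1 \<le> real d - 1"
    proof -
      have "t * real d \<le> 1" using t2 dp by (simp add: field_simps)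
      then have "t * real d * real d \<le> real d" using dp by (simp add: mult_right_mono[of _ 1, simplified])
      then show ?thesis by (simp add: power2_eq_square mult.assoc)
    qed
    have k0': "0 \<le> k" unfolding k_def using a0 dp by simp
    have k1: "k \<le> 1" unfolding k_def using a0 a1 dp by (simp add: field_simps)
    have ksq: "k^2 = (t * (real d)^2 - 1) / (real d - 1)" unfolding k_def using a0 dp by simp
    have tt: "1 / (real d)^2 + k^2 * (real d - 1) / (real d)^2 = t"
      unfolding ksq using dp by (simp add: field_simps)
    have kv: "k * (real d - 1) = sqrt ((t * (real d)^2 - 1) * (real d - 1))"
    proof -
      have "k * (real d - 1) = sqrt ((t * (real d)^2 - 1) / (real d - 1) * (real d - 1)^2)"
        unfolding k_def real_sqrt_mult real_sqrt_abs using dp by simp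
      also have "(t * (real d)^2 - 1) / (real d - 1) * (real d - 1)^2 = (t * (real d)^2 - 1) * (real d - 1)"
        using dp by (simp add: power2_eq_square field_simps)
      finally show ?thesis .
    qed
    have s: "feasible d t (sig k) \<and> ent_fidelity d (T_chan d) \<alpha> (sig k) = v"
      using sigF[OF k0' k1] tt kv unfolding v_def by simp
    have mem: "v \<in> S" unfolding S_def using s by force
    have ub: "s \<le> v" if "s \<in> S" for s
    proof -
      obtain \<rho> where r: "feasible d t \<rho>" "s = ent_fidelity d (T_chan d) \<alpha> \<rho>" using \<open>s \<in> S\<close> unfolding S_def by blast
      show ?thesis unfolding r(2) F v_def using bound[OF r(1) assms(1)] quad_bound[OF assms(1) _ a0] by blast
    qed
    have "O_t d (T_chan d) \<alpha> t = v" unfolding O by (rule cSup_eq_maximum[OF mem ub])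
    then show "let k = sqrt ((t * (real d)^2 - 1) / (real d - 1));
                 \<sigma> = complex_of_real ((1 - k) / (real d)^2) \<cdot>\<^sub>m 1\<^sub>m (d * d)
                     + complex_of_real k \<cdot>\<^sub>m kron (proj0 d) (complex_of_real (1 / real d) \<cdot>\<^sub>m 1\<^sub>m d);
                 v = (1 + sqrt ((t * (real d)^2 - 1) * (real d - 1))) / (real d)^2
             in O_t d (T_chan d) \<alpha> t = v \<and> feasible d t \<sigma> \<and> ent_fidelity d (T_chan d) \<alpha> \<sigma> = v"
      using s unfolding Let_def k_def[symmetric] v_def[symmetric] sig_def by simp
  qed
  show ?thesis using part1 part2 by blast
qed

end
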